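(* Let $p$ be a prime and $n\ge1$. There are only countably many subgroups $V$ of $\mathcal{L}_{n,p}$ with $\pi_1(V)>0$.
   Context: $\mathcal{L}_{n,p}=\left(\bigoplus_{\mathbb{Z}}(\mathbb{Z}/p\mathbb{Z})^n\right)\rtimes\mathbb{Z}$. For a subgroup $V\le\mathcal{L}_{n,p}$, $\pi_1(V)\in\{0,1,2,\dots\}$ is defined by: the image of $V$ under the projection $\mathcal{L}_{n,p}\to\mathbb{Z}$ is $\pi_1(V)\mathbb{Z}$. *)

theory Defs
  imports "HOL-Algebra.Group" "HOL-Library.Countable_Set" "HOL-Computational_Algebra.Primes"
begin

text \<open>Concrete model of L_{n,p} = (direct sum over Z of (Z/pZ)^n) semidirect Z.
  An element is a pair (f, m): f k is the lamp configuration at site k, an element of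
  (Z/pZ)^n encoded as a function nat => int with values in {0..<p} at coordinates i < n
  and 0 at coordinates i >= n; f must be finitely supported; m is in Z.\<close>

type_synonym lamp_elem = "(int \<Rightarrow> nat \<Rightarrow> int) \<times> int"

definition lamp_carrier :: "nat \<Rightarrow> nat \<Rightarrow> lamp_elem set" where
  "lamp_carrier n p = {(f, m). (\<forall>k i. 0 \<le> f k i \<and> f k i < int p)
                              \<and> (\<forall>k i. n \<le> i \<longrightarrow> f k i = 0)
                              \<and> finite {k. f k \<noteq> (\<lambda>i. 0)}}"

definition lamp_mult :: "nat \<Rightarrow> lamp_elem \<Rightarrow> lamp_elem \<Rightarrow> lamp_elem" where
  "lamp_mult p x y = ((\<lambda>k i. (fst x k i + fst y (k - snd x) i) mod int p), snd x + snd y)"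

definition lamplighter :: "nat \<Rightarrow> nat \<Rightarrow> lamp_elem monoid" where
  "lamplighter n p = \<lparr> carrier = lamp_carrier n p, monoid.mult = lamp_mult p,
                        monoid.one = ((\<lambda>k i. 0), 0) \<rparr>"

definition pi1 :: "lamp_elem set \<Rightarrow> nat" where
  "pi1 V = (THE d::nat. snd ` V = {int d * k | k. True})"

end

theory Submission
  imports Defs "HOL-Algebra.Generated_Groups"
begin


definition Lc :: "nat \<Rightarrow> nat \<Rightarrow> (int \<Rightarrow> nat \<Rightarrow> int) set" where
  "Lc n p = {f. (\<forall>k i. 0 \<le> f k i \<and> f k i < int p) \<and> (\<forall>k i. n \<le> i \<longrightarrow> f k i = 0)
               \<and> finite {k. f k \<noteq> (\<lambda>i. 0)}}"

lemma carrier_eq: "carrier (lamplighter n p) = Lc n p \<times> UNIV"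
  by (auto simp: lamplighter_def lamp_carrier_def Lc_def)

lemma mult_eq: "x \<otimes>\<^bsub>lamplighter n p\<^esub> y = lamp_mult p x y"
  by (simp add: lamplighter_def)

lemma one_eq: "\<one>\<^bsub>lamplighter n p\<^esub> = ((\<lambda>k i. 0), 0)"
  by (simp add: lamplighter_def)

lemma Lc_range: "f \<in> Lc n p \<Longrightarrow> 0 \<le> f k i \<and> f k i < int p"
  by (simp add: Lc_def)

lemma Lc_mod: "f \<in> Lc n p \<Longrightarrow> f k i mod int p = f k i"
  by (simp add: Lc_range)

lemma Lc_multI:
  assumes f: "f \<in> Lc n p" and g: "g \<in> Lc n p" and p: "p > 0"
  shows "(\<lambda>k i. (f k i + g (k - a) i) mod int p) \<in> Lc n p"
proof -
  have "{k. (\<lambda>i. (f k i + g (k - a) i) mod int p) \<noteq> (\<lambda>i. 0)}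
        \<subseteq> {k. f k \<noteq> (\<lambda>i. 0)} \<union> (\<lambda>k. k + a) ` {k. g k \<noteq> (\<lambda>i. 0)}"
  proof
    fix k assume "k \<in> {k. (\<lambda>i. (f k i + g (k - a) i) mod int p) \<noteq> (\<lambda>i. 0)}"
    then obtain i where "(f k i + g (k - a) i) mod int p \<noteq> 0" by auto
    hence "f k i \<noteq> 0 \<or> g (k - a) i \<noteq> 0" by auto
    hence "f k \<noteq> (\<lambda>i. 0) \<or> g (k - a) \<noteq> (\<lambda>i. 0)" by auto
    thus "k \<in> {k. f k \<noteq> (\<lambda>i. 0)} \<union> (\<lambda>k. k + a) ` {k. g k \<noteq> (\<lambda>i. 0)}"
      by (auto intro!: image_eqI[where x="k - a"])
  qed
  moreover have "finite ({k. f k \<noteq> (\<lambda>i. 0)} \<union> (\<lambda>k. k + a) ` {k. g k \<noteq> (\<lambda>i. 0)})"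
    using f g by (simp add: Lc_def)
  ultimately show ?thesis using f g p
    by (auto simp: Lc_def intro: finite_subset)
qed

lemma Lc_invI:
  assumes f: "f \<in> Lc n p" and p: "p > 0"
  shows "(\<lambda>k i. (- f (k + m) i) mod int p) \<in> Lc n p"
proof -
  have "{k. (\<lambda>i. (- f (k + m) i) mod int p) \<noteq> (\<lambda>i. 0)}
        \<subseteq> (\<lambda>k. k - m) ` {k. f k \<noteq> (\<lambda>i. 0)}"
  proof
    fix k assume "k \<in> {k. (\<lambda>i. (- f (k + m) i) mod int p) \<noteq> (\<lambda>i. 0)}"
    then obtain i where "(- f (k + m) i) mod int p \<noteq> 0" by auto
    hence "f (k + m) \<noteq> (\<lambda>i. 0)" by auto
    thus "k \<in> (\<lambda>k. k - m) ` {k. f k \<noteq> (\<lambda>i. 0)}"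
      by (auto intro!: image_eqI[where x="k + m"])
  qed
  moreover have "finite ((\<lambda>k. k - m) ` {k. f k \<noteq> (\<lambda>i. 0)})"
    using f by (simp add: Lc_def)
  ultimately show ?thesis using f p
    by (auto simp: Lc_def intro: finite_subset)
qed

lemma lamp_group:
  assumes p: "p > 0"
  shows "group (lamplighter n p)"
proof (rule groupI)
  fix x y assume "x \<in> carrier (lamplighter n p)" "y \<in> carrier (lamplighter n p)"
  thus "x \<otimes>\<^bsub>lamplighter n p\<^esub> y \<in> carrier (lamplighter n p)"
    using Lc_multI[OF _ _ p] by (auto simp: carrier_eq mult_eq lamp_mult_def)
next
  show "\<one>\<^bsub>lamplighter n p\<^esub> \<in> carrier (lamplighter n p)"
    using p by (simp add: carrier_eq one_eq Lc_def)
next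
  fix x y z assume "x \<in> carrier (lamplighter n p)" "y \<in> carrier (lamplighter n p)"
    "z \<in> carrier (lamplighter n p)"
  show "x \<otimes>\<^bsub>lamplighter n p\<^esub> y \<otimes>\<^bsub>lamplighter n p\<^esub> z =
        x \<otimes>\<^bsub>lamplighter n p\<^esub> (y \<otimes>\<^bsub>lamplighter n p\<^esub> z)"
    by (cases x, cases y, cases z) (simp add: mult_eq lamp_mult_def mod_add_left_eq mod_add_right_eq diff_diff_eq add.assoc)
next
  fix x assume "x \<in> carrier (lamplighter n p)"
  thus "\<one>\<^bsub>lamplighter n p\<^esub> \<otimes>\<^bsub>lamplighter n p\<^esub> x = x"
    by (cases x) (auto simp: carrier_eq one_eq mult_eq lamp_mult_def Lc_mod)
next
  fix x assume x: "x \<in> carrier (lamplighter n p)"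
  obtain f m where xe: "x = (f, m)" by (cases x)
  have f: "f \<in> Lc n p" using x xe by (simp add: carrier_eq)
  show "\<exists>y\<in>carrier (lamplighter n p). y \<otimes>\<^bsub>lamplighter n p\<^esub> x = \<one>\<^bsub>lamplighter n p\<^esub>"
    by (rule bexI[where x="((\<lambda>k i. (- f (k + m) i) mod int p), - m)"])
       (auto simp: xe carrier_eq mult_eq one_eq lamp_mult_def mod_simps Lc_invI[OF f p])
qed

lemma lamp_inv:
  assumes p: "p > 0" and f: "f \<in> Lc n p"
  shows "inv\<^bsub>lamplighter n p\<^esub> (f, m) = ((\<lambda>k i. (- f (k + m) i) mod int p), - m)"
proof -
  interpret group "lamplighter n p" by (rule lamp_group[OF p])
  show ?thesis
    by (rule inv_equality)
       (auto simp: carrier_eq mult_eq one_eq lamp_mult_def mod_simps Lc_invI[OF f p] f)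
qed

lemma snd_mult: "snd (x \<otimes>\<^bsub>lamplighter n p\<^esub> y) = snd x + snd y"
  by (simp add: mult_eq lamp_mult_def)

lemma snd_inv: "p > 0 \<Longrightarrow> x \<in> carrier (lamplighter n p) \<Longrightarrow> snd (inv\<^bsub>lamplighter n p\<^esub> x) = - snd x"
  by (cases x) (simp only: carrier_eq mem_Times_iff lamp_inv snd_conv fst_conv)


lemma snd_nat_pow:
  assumes "p > 0"
  shows "snd (x [^]\<^bsub>lamplighter n p\<^esub> (k::nat)) = int k * snd x"
proof (induction k)
  case 0
  then show ?case by (simp add: one_eq)
next
  case (Suc k)
  have "x [^]\<^bsub>lamplighter n p\<^esub> (Suc k) = x [^]\<^bsub>lamplighter n p\<^esub> k \<otimes>\<^bsub>lamplighter n p\<^esub> x"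
    by (rule monoid.nat_pow_Suc[OF group.is_monoid[OF lamp_group[OF assms]]])
  then show ?case using Suc by (simp add: snd_mult algebra_simps)
qed

lemma snd_int_pow:
  assumes "p > 0" "x \<in> carrier (lamplighter n p)"
  shows "snd (x [^]\<^bsub>lamplighter n p\<^esub> (k::int)) = k * snd x"
proof (cases "k < 0")
  case True
  have c: "x [^]\<^bsub>lamplighter n p\<^esub> (nat (-k)) \<in> carrier (lamplighter n p)"
    by (rule monoid.nat_pow_closed[OF group.is_monoid[OF lamp_group[OF assms(1)]] assms(2)])
  have e: "x [^]\<^bsub>lamplighter n p\<^esub> k = inv\<^bsub>lamplighter n p\<^esub> (x [^]\<^bsub>lamplighter n p\<^esub> (nat (-k)))"
    using True by (simp only: int_pow_def2 if_True)
  have "snd (x [^]\<^bsub>lamplighter n p\<^esub> k) = - snd (x [^]\<^bsub>lamplighter n p\<^esub> (nat (-k)))"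
    unfolding e by (rule snd_inv[OF assms(1) c])
  also have "\<dots> = - (int (nat (-k)) * snd x)" using snd_nat_pow[OF assms(1)] by metis
  also have "\<dots> = k * snd x" using True by simp
  finally show ?thesis .
next
  case False
  have e: "x [^]\<^bsub>lamplighter n p\<^esub> k = x [^]\<^bsub>lamplighter n p\<^esub> (nat k)"
    using False by (simp only: int_pow_def2 if_False)
  show ?thesis unfolding e using snd_nat_pow[OF assms(1), where x=x and k="nat k"] False by simp
qed


definition addf :: "nat \<Rightarrow> (int\<Rightarrow>nat\<Rightarrow>int) \<Rightarrow> (int\<Rightarrow>nat\<Rightarrow>int) \<Rightarrow> (int\<Rightarrow>nat\<Rightarrow>int)" where
  "addf p f g = (\<lambda>k i. (f k i + g k i) mod int p)"
definition negf :: "nat \<Rightarrow> (int\<Rightarrow>nat\<Rightarrow>int) \<Rightarrow> (int\<Rightarrow>nat\<Rightarrow>int)" where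
  "negf p f = (\<lambda>k i. (- f k i) mod int p)"
definition shf :: "int \<Rightarrow> (int\<Rightarrow>nat\<Rightarrow>int) \<Rightarrow> (int\<Rightarrow>nat\<Rightarrow>int)" where
  "shf a f = (\<lambda>k i. f (k - a) i)"

inductive_set clo :: "nat \<Rightarrow> int \<Rightarrow> (int\<Rightarrow>nat\<Rightarrow>int) set \<Rightarrow> (int\<Rightarrow>nat\<Rightarrow>int) set"
  for p d A where
  base: "f \<in> A \<Longrightarrow> f \<in> clo p d A"
| add: "f \<in> clo p d A \<Longrightarrow> g \<in> clo p d A \<Longrightarrow> addf p f g \<in> clo p d A"
| shl: "f \<in> clo p d A \<Longrightarrow> shf d f \<in> clo p d A"
| shr: "f \<in> clo p d A \<Longrightarrow> shf (-d) f \<in> clo p d A"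

lemma shf_shf: "shf a (shf b f) = shf (a + b) f"
  by (simp add: shf_def diff_diff_eq add.commute)

lemma shf_0: "shf 0 f = f"
  by (simp add: shf_def)

definition box :: "nat \<Rightarrow> nat \<Rightarrow> int \<Rightarrow> (int\<Rightarrow>nat\<Rightarrow>int) set" where
  "box n p b = {g. (\<forall>k i. 0 \<le> g k i \<and> g k i < int p) \<and> (\<forall>k i. \<not>(0 \<le> k \<and> k < b \<and> i < n) \<longrightarrow> g k i = 0)}"

lemma finite_box: "finite (box n p b)"
proof -
  let ?I = "{0..<b} \<times> {..<n}"
  let ?r = "\<lambda>g. restrict (\<lambda>(k,i). g k i) ?I"
  have inj: "inj_on ?r (box n p b)"
  proof (rule inj_onI)
    fix g h assume g: "g \<in> box n p b" and h: "h \<in> box n p b" and e: "?r g = ?r h"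
    show "g = h"
    proof (intro ext)
      fix k i
      show "g k i = h k i"
      proof (cases "0 \<le> k \<and> k < b \<and> i < n")
        case True
        hence "?r g (k,i) = ?r h (k,i)" using e by simp
        thus ?thesis using True by simp
      next
        case False
        thus ?thesis using g h by (simp add: box_def)
      qed
    qed
  qed
  have sub: "?r ` box n p b \<subseteq> PiE ?I (\<lambda>_. {0..<int p})"
  proof (rule image_subsetI, rule PiE_I)
    fix g x assume g: "g \<in> box n p b" and x: "x \<in> ?I"
    obtain k i where xe: "x = (k, i)" by (cases x)
    show "?r g x \<in> {0..<int p}" using g x by (simp add: xe box_def)
  next
    fix g x assume "x \<notin> ?I"
    thus "?r g x = undefined" by simp
  qed
  have "finite (PiE ?I (\<lambda>_. {0..<int p}))"
    by (rule finite_PiE) auto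
  hence "finite (?r ` box n p b)" using sub finite_subset by blast
  thus ?thesis using inj finite_imageD by blast
qed

lemma stab:
  fixes L :: "nat \<Rightarrow> 'a set"
  assumes mono: "\<And>m. L m \<subseteq> L (Suc m)" and LT: "\<And>m. L m \<subseteq> T" and fin: "finite T"
  shows "\<exists>M. \<forall>m\<ge>M. L m = L M"
proof -
  define U where "U = (\<Union>m. L m)"
  have finU: "finite U" using LT fin unfolding U_def by (meson UN_least finite_subset)
  define idx where "idx x = (LEAST m. x \<in> L m)" for x
  define M where "M = Max (insert 0 (idx ` U))"
  have mle: "m \<le> m' \<Longrightarrow> L m \<subseteq> L m'" for m m'
    by (rule lift_Suc_mono_le[of L, OF mono])
  have "L m = L M" if "m \<ge> M" for m
  proof
    show "L M \<subseteq> L m" using mle that by blast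
    show "L m \<subseteq> L M"
    proof
      fix x assume x: "x \<in> L m"
      hence "x \<in> L (idx x)" unfolding idx_def by (rule LeastI)
      moreover have "x \<in> U" using x unfolding U_def by blast
      hence "idx x \<le> M" unfolding M_def using finU by (intro Max_ge) auto
      ultimately show "x \<in> L M" using mle by blast
    qed
  qed
  thus ?thesis by blast
qed

lemma key:
  fixes K :: "(int\<Rightarrow>nat\<Rightarrow>int) set" and d :: int
  assumes KL: "K \<subseteq> Lc n p" and p: "p > 0" and d: "d > 0"
    and addK: "\<And>f g. f \<in> K \<Longrightarrow> g \<in> K \<Longrightarrow> addf p f g \<in> K"
    and negK: "\<And>f. f \<in> K \<Longrightarrow> negf p f \<in> K"
    and shlK: "\<And>f. f \<in> K \<Longrightarrow> shf d f \<in> K"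
    and shrK: "\<And>f. f \<in> K \<Longrightarrow> shf (-d) f \<in> K"
  shows "\<exists>A. finite A \<and> A \<subseteq> Lc n p \<and> K = clo p d A"
proof -
  define Km where "Km m = {f\<in>K. \<forall>k i. (k < 0 \<or> k \<ge> d * int m) \<longrightarrow> f k i = 0}" for m
  define lead where "lead m f = (\<lambda>j i. if 0 \<le> j \<and> j < d then f (d * int m + j) i else (0::int))"
    for m and f :: "int\<Rightarrow>nat\<Rightarrow>int"
  define L where "L m = lead m ` Km (Suc m)" for m
  have shK: "shf (d * int t) f \<in> K" if "f \<in> K" for f t
  proof (induction t)
    case 0 then show ?case using that by (simp add: shf_0)
  next
    case (Suc t)
    have "shf (d * int (Suc t)) f = shf d (shf (d * int t) f)"
      by (simp add: shf_shf algebra_simps)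
    then show ?case using shlK[OF Suc] by simp
  qed
  have shKm: "shf (d * int t) f \<in> Km (Suc (m + t)) \<and> lead (m + t) (shf (d * int t) f) = lead m f"
    if f: "f \<in> Km (Suc m)" for f m t
  proof
    have fK: "f \<in> K" using f by (simp add: Km_def)
    show "shf (d * int t) f \<in> Km (Suc (m + t))"
      unfolding Km_def
    proof (intro CollectI conjI allI impI)
      show "shf (d * int t) f \<in> K" using shK[OF fK] .
      fix k i assume "k < 0 \<or> d * int (Suc (m + t)) \<le> k"
      moreover have "0 \<le> d * int t" using d by simp
      ultimately have "k - d * int t < 0 \<or> d * int (Suc m) \<le> k - d * int t"
        by (auto simp: algebra_simps)
      moreover have fz: "\<And>k i. k < 0 \<or> d * int (Suc m) \<le> k \<Longrightarrow> f k i = 0"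
        using f unfolding Km_def by blast
      ultimately show "shf (d * int t) f k i = 0" unfolding shf_def by blast
    qed
    show "lead (m + t) (shf (d * int t) f) = lead m f"
    proof -
      have e: "d * int (m + t) + j - d * int t = d * int m + j" for j
        by (simp add: algebra_simps)
      show ?thesis unfolding lead_def shf_def by (simp only: e)
    qed
  qed
  have mono: "L m \<subseteq> L (Suc m)" for m
  proof
    fix x assume "x \<in> L m"
    then obtain f where f: "f \<in> Km (Suc m)" and x: "x = lead m f" by (auto simp: L_def)
    from shKm[OF f, of 1] have "shf d f \<in> Km (Suc (Suc m))" "lead (Suc m) (shf d f) = lead m f"
      by simp_all
    thus "x \<in> L (Suc m)" unfolding L_def x by (metis image_eqI)
  qed
  have LT: "L m \<subseteq> box n p d" for m
  proof
    fix x assume "x \<in> L m"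
    then obtain f where f: "f \<in> Km (Suc m)" and x: "x = lead m f" by (auto simp: L_def)
    have fL: "f \<in> Lc n p" using f KL by (auto simp: Km_def)
    show "x \<in> box n p d"
      using Lc_range[OF fL] fL p unfolding x box_def lead_def Lc_def by auto
  qed
  obtain M where M: "\<And>m. m \<ge> M \<Longrightarrow> L m = L M"
    using stab[of L, OF mono LT finite_box[of n p d]] by blast
  define A where "A = Km (Suc M)"
  have AK: "A \<subseteq> K" by (auto simp: A_def Km_def)
  have finA: "finite A"
  proof (rule finite_subset[OF _ finite_box[of n p "d * int (Suc M)"]])
    show "A \<subseteq> box n p (d * int (Suc M))"
    proof
      fix f assume f: "f \<in> A"
      hence fL: "f \<in> Lc n p" using AK KL by auto
      have fz: "\<And>k i. k < 0 \<or> d * int (Suc M) \<le> k \<Longrightarrow> f k i = 0"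
        using f unfolding A_def Km_def by blast
      have fn: "\<And>k i. n \<le> i \<Longrightarrow> f k i = 0" using fL unfolding Lc_def by blast
      show "f \<in> box n p (d * int (Suc M))"
        unfolding box_def
      proof (intro CollectI conjI allI impI)
        fix k i show "0 \<le> f k i" "f k i < int p" using Lc_range[OF fL] by auto
      next
        fix k i assume "\<not> (0 \<le> k \<and> k < d * int (Suc M) \<and> i < n)"
        hence "k < 0 \<or> d * int (Suc M) \<le> k \<or> n \<le> i" by auto
        thus "f k i = 0" using fz fn by blast
      qed
    qed
  qed
  have cloK: "clo p d A \<subseteq> K"
  proof
    fix f assume "f \<in> clo p d A"
    thus "f \<in> K" by induction (use AK addK shlK shrK in auto)
  qed
  have Km_mono: "Km m \<subseteq> Km m'" if "m \<le> m'" for m m'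
  proof -
    have "d * int m \<le> d * int m'" using that d by simp
    thus ?thesis unfolding Km_def by force
  qed
  have cloSh: "shf (d * int t) f \<in> clo p d A \<and> shf (- (d * int t)) f \<in> clo p d A"
    if "f \<in> clo p d A" for f t
  proof (induction t)
    case 0 then show ?case using that by (simp add: shf_0)
  next
    case (Suc t)
    have "shf (d * int (Suc t)) f = shf d (shf (d * int t) f)"
      by (simp add: shf_shf algebra_simps)
    moreover have "shf (- (d * int (Suc t))) f = shf (-d) (shf (- (d * int t)) f)"
      by (simp add: shf_shf algebra_simps)
    ultimately show ?case using Suc by (auto intro: clo.shl clo.shr)
  qed
  have main: "\<forall>f \<in> Km m. f \<in> clo p d A" for m
  proof (induction m)
    case 0
    then show ?case using Km_mono[of 0 "Suc M"] by (auto simp: A_def intro: clo.base)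
  next
    case (Suc m)
    show ?case
    proof (cases "Suc m \<le> Suc M")
      case True
      then show ?thesis using Km_mono[OF True] by (auto simp: A_def intro: clo.base)
    next
      case False
      hence mM: "M \<le> m" by simp
      show ?thesis
      proof
        fix w assume w: "w \<in> Km (Suc m)"
        have wL: "w \<in> Lc n p" using w KL by (auto simp: Km_def)
        have "lead m w \<in> L M" using M[OF mM] w by (auto simp: L_def)
        then obtain u where u: "u \<in> Km (Suc M)" and lu: "lead M u = lead m w"
          by (auto simp: L_def)
        define t where "t = m - M"
        have mt: "M + t = m" using mM by (simp add: t_def)
        define u' where "u' = shf (d * int t) u"
        have u'K: "u' \<in> Km (Suc m)" and lu': "lead m u' = lead m w"
          using shKm[OF u, of t] lu by (simp_all add: mt u'_def)
        have u'L: "u' \<in> Lc n p" using u'K KL by (auto simp: Km_def)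
        have u'c: "u' \<in> clo p d A" unfolding u'_def using cloSh[of u t] u
          by (auto simp: A_def intro: clo.base)
        define v where "v = addf p w (negf p u')"
        have vK: "v \<in> K" using w u'K addK negK by (auto simp: Km_def v_def)
        have vKm: "v \<in> Km m"
          unfolding Km_def
        proof (intro CollectI conjI allI impI vK)
          fix k i assume k: "k < 0 \<or> d * int m \<le> k"
          show "v k i = 0"
          proof (cases "k < 0 \<or> d * int (Suc m) \<le> k")
            case True
            then have "w k i = 0" "u' k i = 0" using w u'K by (auto simp: Km_def)
            thus ?thesis by (simp add: v_def addf_def negf_def)
          next
            case False
            define j where "j = k - d * int m"
            have j: "0 \<le> j" "j < d" using k False by (auto simp: j_def algebra_simps)
            have "lead m u' j i = lead m w j i" using lu' by simp
            hence "u' k i = w k i" using j by (simp add: lead_def j_def)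
            thus ?thesis by (simp add: v_def addf_def negf_def mod_simps)
          qed
        qed
        have vc: "v \<in> clo p d A" using Suc vKm by blast
        have "addf p v u' = w"
        proof (intro ext)
          fix k i
          have "addf p v u' k i = (w k i - u' k i + u' k i) mod int p"
            by (simp add: v_def addf_def negf_def mod_simps)
          also have "\<dots> = w k i" using Lc_range[OF wL] by simp
          finally show "addf p v u' k i = w k i" .
        qed
        thus "w \<in> clo p d A" using clo.add[OF vc u'c] by simp
      qed
    qed
  qed
  have Kclo: "K \<subseteq> clo p d A"
  proof
    fix f assume fK: "f \<in> K"
    have fL: "f \<in> Lc n p" using fK KL by auto
    define S where "S = {k. f k \<noteq> (\<lambda>i. 0)}"
    have finS: "finite S" using fL by (simp add: Lc_def S_def)
    define B where "B = Max (insert 0 (abs ` S))"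
    have B: "f k i = 0" if "\<bar>k\<bar> > B" for k i
    proof -
      have "k \<notin> S"
      proof
        assume "k \<in> S"
        hence "\<bar>k\<bar> \<le> B" unfolding B_def using finS by (intro Max_ge) auto
        thus False using that by simp
      qed
      thus ?thesis by (simp add: S_def)
    qed
    have B0: "B \<ge> 0" unfolding B_def using finS by (intro Max_ge) auto
    define t where "t = nat B + 1"
    have tB: "int t > B" using B0 by (simp add: t_def)
    have dt: "d * int t \<ge> int t" using d by (simp add: mult_le_cancel_right1)
    define g where "g = shf (d * int t) f"
    have gK: "g \<in> Km (2 * t)"
      unfolding Km_def
    proof (intro CollectI conjI allI impI)
      show "g \<in> K" unfolding g_def by (rule shK[OF fK])
      fix k i assume k: "k < 0 \<or> d * int (2 * t) \<le> k"
      have "\<bar>k - d * int t\<bar> > B" using k dt tB by (auto simp: algebra_simps)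
      thus "g k i = 0" by (simp add: g_def shf_def B)
    qed
    have "g \<in> clo p d A" using main gK by blast
    hence "shf (- (d * int t)) g \<in> clo p d A" using cloSh by blast
    moreover have "shf (- (d * int t)) g = f" by (simp add: g_def shf_shf shf_0)
    ultimately show "f \<in> clo p d A" by simp
  qed
  show ?thesis
    using finA AK KL cloK Kclo by (intro exI[of _ A]) auto
qed



definition KV :: "lamp_elem set \<Rightarrow> (int\<Rightarrow>nat\<Rightarrow>int) set" where
  "KV V = {f. (f, 0) \<in> V}"

lemma mult_zero_zero: "(f, 0) \<otimes>\<^bsub>lamplighter n p\<^esub> (g, 0) = (addf p f g, 0)"
  by (simp add: mult_eq lamp_mult_def addf_def)

lemma inv_zero: "p > 0 \<Longrightarrow> f \<in> Lc n p \<Longrightarrow> inv\<^bsub>lamplighter n p\<^esub> (f, 0) = (negf p f, 0)"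
  by (simp add: lamp_inv negf_def)

lemma conj_l:
  assumes p: "p > 0" and h: "h \<in> Lc n p" and f: "f \<in> Lc n p"
  shows "(h, d) \<otimes>\<^bsub>lamplighter n p\<^esub> (f, 0) \<otimes>\<^bsub>lamplighter n p\<^esub> inv\<^bsub>lamplighter n p\<^esub> (h, d) = (shf d f, 0)"
proof -
  have "fst ((h, d) \<otimes>\<^bsub>lamplighter n p\<^esub> (f, 0) \<otimes>\<^bsub>lamplighter n p\<^esub> inv\<^bsub>lamplighter n p\<^esub> (h, d)) k i
        = f (k - d) i" for k i
  proof -
    have "fst ((h, d) \<otimes>\<^bsub>lamplighter n p\<^esub> (f, 0) \<otimes>\<^bsub>lamplighter n p\<^esub> inv\<^bsub>lamplighter n p\<^esub> (h, d)) k i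
        = ((h k i + f (k - d) i) mod int p + (- h (k - d + d) i) mod int p) mod int p"
      by (simp add: mult_eq lamp_mult_def lamp_inv[OF p h])
    also have "\<dots> = f (k - d) i mod int p" by (simp add: mod_simps)
    also have "\<dots> = f (k - d) i" by (rule Lc_mod[OF f])
    finally show ?thesis .
  qed
  moreover have "snd ((h, d) \<otimes>\<^bsub>lamplighter n p\<^esub> (f, 0) \<otimes>\<^bsub>lamplighter n p\<^esub> inv\<^bsub>lamplighter n p\<^esub> (h, d)) = 0"
    by (simp add: mult_eq lamp_mult_def lamp_inv[OF p h])
  ultimately show ?thesis by (simp add: shf_def prod_eq_iff fun_eq_iff)
qed

lemma conj_r:
  assumes p: "p > 0" and h: "h \<in> Lc n p" and f: "f \<in> Lc n p"
  shows "inv\<^bsub>lamplighter n p\<^esub> (h, d) \<otimes>\<^bsub>lamplighter n p\<^esub> (f, 0) \<otimes>\<^bsub>lamplighter n p\<^esub> (h, d) = (shf (-d) f, 0)"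
proof -
  have "fst (inv\<^bsub>lamplighter n p\<^esub> (h, d) \<otimes>\<^bsub>lamplighter n p\<^esub> (f, 0) \<otimes>\<^bsub>lamplighter n p\<^esub> (h, d)) k i
        = f (k + d) i" for k i
  proof -
    have "fst (inv\<^bsub>lamplighter n p\<^esub> (h, d) \<otimes>\<^bsub>lamplighter n p\<^esub> (f, 0) \<otimes>\<^bsub>lamplighter n p\<^esub> (h, d)) k i
        = (((- h (k + d) i) mod int p + f (k + d) i) mod int p + h (k + d) i) mod int p"
      by (simp add: mult_eq lamp_mult_def lamp_inv[OF p h])
    also have "\<dots> = f (k + d) i mod int p" by (simp add: mod_simps)
    also have "\<dots> = f (k + d) i" by (rule Lc_mod[OF f])
    finally show ?thesis .
  qed
  moreover have "snd (inv\<^bsub>lamplighter n p\<^esub> (h, d) \<otimes>\<^bsub>lamplighter n p\<^esub> (f, 0) \<otimes>\<^bsub>lamplighter n p\<^esub> (h, d)) = 0"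
    by (simp add: mult_eq lamp_mult_def lamp_inv[OF p h])
  ultimately show ?thesis by (simp add: shf_def prod_eq_iff fun_eq_iff)
qed



lemma dZ_unique:
  assumes "{int d * k |k. True} = {int d' * k |k. True}"
  shows "d = d'"
proof -
  have "int d \<in> {int d' * k |k. True}" using assms[symmetric] by (auto intro: exI[of _ 1])
  then obtain k1 where "int d = int d' * k1" by auto
  hence "int d' dvd int d" by (rule dvdI)
  moreover have "int d' \<in> {int d * k |k. True}" using assms by (auto intro: exI[of _ 1])
  then obtain k2 where "int d' = int d * k2" by auto
  hence "int d dvd int d'" by (rule dvdI)
  ultimately show ?thesis by (simp add: dvd_antisym)
qed

lemma pi1_char:
  assumes p: "p > 0" and V: "subgroup V (lamplighter n p)"
  shows "snd ` V = {int (pi1 V) * k |k. True}"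
proof -
  interpret group "lamplighter n p" by (rule lamp_group[OF p])
  have Vc: "V \<subseteq> carrier (lamplighter n p)" using V by (rule subgroup.subset)
  have ex: "\<exists>d::nat. snd ` V = {int d * k |k. True}"
  proof (cases "\<exists>x\<in>V. snd x > 0")
    case True
    define P where "P m = (0 < m \<and> (\<exists>x\<in>V. snd x = int m))" for m :: nat
    obtain x where x: "x \<in> V" "snd x > 0" using True by blast
    have "P (nat (snd x))" using x by (auto simp: P_def intro!: bexI[of _ x])
    hence PD: "P (Least P)" by (rule LeastI)
    define D where "D = Least P"
    have minD: "D \<le> m" if "P m" for m using that unfolding D_def by (rule Least_le)
    obtain x0 where x0: "x0 \<in> V" "snd x0 = int D" and D0: "D > 0"
      using PD by (auto simp: P_def D_def)
    have x0c: "x0 \<in> carrier (lamplighter n p)" using x0 Vc by auto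
    have "snd ` V = {int D * k |k. True}"
    proof
      show "snd ` V \<subseteq> {int D * k |k. True}"
      proof
        fix s assume "s \<in> snd ` V"
        then obtain y where y: "y \<in> V" "snd y = s" by auto
        have yc: "y \<in> carrier (lamplighter n p)" using y Vc by auto
        define q where "q = s div int D"
        define r where "r = s mod int D"
        have pc: "x0 [^]\<^bsub>lamplighter n p\<^esub> q \<in> V"
          by (rule subgroup_int_pow_closed[OF V x0(1)])
        have pcc: "x0 [^]\<^bsub>lamplighter n p\<^esub> q \<in> carrier (lamplighter n p)" using pc Vc by auto
        define z where "z = y \<otimes>\<^bsub>lamplighter n p\<^esub> inv\<^bsub>lamplighter n p\<^esub> (x0 [^]\<^bsub>lamplighter n p\<^esub> q)"
        have zV: "z \<in> V" unfolding z_def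
          using subgroup.m_closed[OF V y(1) subgroup.m_inv_closed[OF V pc]] .
        have "snd z = s - q * int D"
          unfolding z_def using snd_mult snd_inv[OF p pcc] snd_int_pow[OF p x0c] x0 y
          by simp
        also have "\<dots> = r" unfolding q_def r_def by (simp add: minus_div_mult_eq_mod)
        finally have zr: "snd z = r" .
        have r0: "0 \<le> r" "r < int D" using D0 by (simp_all add: r_def)
        have "r = 0"
        proof (rule ccontr)
          assume "r \<noteq> 0"
          hence "P (nat r)" using r0 zV zr by (auto simp: P_def intro!: bexI[of _ z])
          hence "D \<le> nat r" by (rule minD)
          thus False using r0 by linarith
        qed
        hence "s = int D * q" unfolding q_def using r_def
          by (metis add.right_neutral mult.commute div_mult_mod_eq)
        thus "s \<in> {int D * k |k. True}" by blast
      qed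
    next
      show "{int D * k |k. True} \<subseteq> snd ` V"
      proof
        fix s assume "s \<in> {int D * k |k. True}"
        then obtain k where s: "s = int D * k" by blast
        have "x0 [^]\<^bsub>lamplighter n p\<^esub> k \<in> V"
          by (rule subgroup_int_pow_closed[OF V x0(1)])
        moreover have "snd (x0 [^]\<^bsub>lamplighter n p\<^esub> k) = s"
          using snd_int_pow[OF p x0c] x0 s by simp
        ultimately show "s \<in> snd ` V" by (metis image_eqI)
      qed
    qed
    thus ?thesis by blast
  next
    case False
    have "snd x = 0" if x: "x \<in> V" for x
    proof (rule ccontr)
      assume ne: "snd x \<noteq> 0"
      have xc: "x \<in> carrier (lamplighter n p)" using x Vc by auto
      have iV: "inv\<^bsub>lamplighter n p\<^esub> x \<in> V" by (rule subgroup.m_inv_closed[OF V x])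
      have si: "snd (inv\<^bsub>lamplighter n p\<^esub> x) = - snd x" by (rule snd_inv[OF p xc])
      have "\<not> 0 < snd x" using False x by blast
      hence "snd x < 0" using ne by linarith
      hence "0 < snd (inv\<^bsub>lamplighter n p\<^esub> x)" using si by simp
      thus False using False iV by blast
    qed
    moreover have "\<one>\<^bsub>lamplighter n p\<^esub> \<in> V" by (rule subgroup.one_closed[OF V])
    ultimately have "snd ` V = {0}" by (force simp: one_eq)
    hence "snd ` V = {int 0 * k |k. True}" by simp
    thus ?thesis by blast
  qed
  then obtain d where d: "snd ` V = {int d * k |k. True}" by blast
  have "pi1 V = d" unfolding pi1_def
  proof (rule the_equality)
    show "snd ` V = {int d * k |k. True}" by (rule d)
    fix d' assume "snd ` V = {int d' * k |k. True}"
    thus "d' = d" using d dZ_unique by metis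
  qed
  thus ?thesis using d by simp
qed

lemma countable_Lc: "countable (Lc n p)"
proof -
  define enc where "enc f = {(k, i, f k i) | k i. f k i \<noteq> 0}" for f :: "int\<Rightarrow>nat\<Rightarrow>int"
  have inj: "inj_on enc (Lc n p)"
  proof (rule inj_onI)
    fix f g assume e: "enc f = enc g"
    have "f k i = g k i" for k i
    proof (cases "f k i = 0")
      case True
      show ?thesis
      proof (rule ccontr)
        assume "f k i \<noteq> g k i"
        hence "(k, i, g k i) \<in> enc g" using True by (auto simp: enc_def)
        hence "(k, i, g k i) \<in> enc f" using e by simp
        thus False using True \<open>f k i \<noteq> g k i\<close> by (auto simp: enc_def)
      qed
    next
      case False
      hence "(k, i, f k i) \<in> enc f" by (auto simp: enc_def)
      hence "(k, i, f k i) \<in> enc g" using e by simp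
      thus ?thesis by (auto simp: enc_def)
    qed
    thus "f = g" by (intro ext)
  qed
  have "enc ` Lc n p \<subseteq> Collect finite"
  proof
    fix A assume "A \<in> enc ` Lc n p"
    then obtain f where f: "f \<in> Lc n p" and A: "A = enc f" by auto
    have "A \<subseteq> (\<lambda>(k, i). (k, i, f k i)) ` ({k. f k \<noteq> (\<lambda>i. 0)} \<times> {..<n})"
    proof
      fix x assume "x \<in> A"
      then obtain k i where x: "x = (k, i, f k i)" "f k i \<noteq> 0" by (auto simp: A enc_def)
      have fn: "\<forall>k i. n \<le> i \<longrightarrow> f k i = 0" using f by (simp add: Lc_def)
      have "i < n" using fn x(2) not_le by blast
      moreover have "f k \<noteq> (\<lambda>i. 0)" using x(2) by auto
      ultimately show "x \<in> (\<lambda>(k, i). (k, i, f k i)) ` ({k. f k \<noteq> (\<lambda>i. 0)} \<times> {..<n})"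
        using x(1) by force
    qed
    moreover have "finite ({k. f k \<noteq> (\<lambda>i. 0)} \<times> {..<n})" using f by (simp add: Lc_def)
    ultimately show "A \<in> Collect finite" by (auto intro: finite_subset)
  qed
  hence "countable (enc ` Lc n p)" by (rule countable_subset[OF _ countable_Collect_finite])
  thus ?thesis using inj by (rule countable_image_inj_on)
qed



lemma sub_lemma:
  assumes p: "p > 0" and V: "subgroup V (lamplighter n p)" and V': "subgroup V' (lamplighter n p)"
    and K: "KV V \<subseteq> KV V'" and h: "h \<in> V" "h \<in> V'" and hs: "snd h = int (pi1 V)"
  shows "V \<subseteq> V'"
proof
  interpret group "lamplighter n p" by (rule lamp_group[OF p])
  fix x assume x: "x \<in> V"
  have Vc: "V \<subseteq> carrier (lamplighter n p)" using V by (rule subgroup.subset)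
  have xc: "x \<in> carrier (lamplighter n p)" using x Vc by auto
  have hc: "h \<in> carrier (lamplighter n p)" using h Vc by auto
  have "snd x \<in> snd ` V" using x by simp
  then obtain k where k: "snd x = int (pi1 V) * k" using pi1_char[OF p V] by auto
  define hk where "hk = h [^]\<^bsub>lamplighter n p\<^esub> k"
  have hkV: "hk \<in> V" unfolding hk_def by (rule subgroup_int_pow_closed[OF V h(1)])
  have hkV': "hk \<in> V'" unfolding hk_def by (rule subgroup_int_pow_closed[OF V' h(2)])
  have hkc: "hk \<in> carrier (lamplighter n p)" using hkV Vc by auto
  define y where "y = x \<otimes>\<^bsub>lamplighter n p\<^esub> inv\<^bsub>lamplighter n p\<^esub> hk"
  have yV: "y \<in> V" unfolding y_def
    using subgroup.m_closed[OF V x subgroup.m_inv_closed[OF V hkV]] .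
  have "snd y = snd x - k * snd h"
    unfolding y_def hk_def using snd_mult snd_inv[OF p] snd_int_pow[OF p hc] hc by simp
  hence "snd y = 0" using k hs by simp
  hence "y = (fst y, 0)" by (simp add: prod_eq_iff)
  hence "fst y \<in> KV V" using yV unfolding KV_def by simp
  hence "(fst y, 0) \<in> V'" using K unfolding KV_def by auto
  hence yV': "y \<in> V'" using \<open>y = (fst y, 0)\<close> by simp
  have "y \<otimes>\<^bsub>lamplighter n p\<^esub> hk = x"
    unfolding y_def using xc hkc by (simp add: m_assoc)
  moreover have "y \<otimes>\<^bsub>lamplighter n p\<^esub> hk \<in> V'" by (rule subgroup.m_closed[OF V' yV' hkV'])
  ultimately show "x \<in> V'" by simp
qed

theorem lemma2p2:
  fixes n p :: nat
  assumes "prime p" and "n \<ge> 1"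
  shows "countable {V. subgroup V (lamplighter n p) \<and> pi1 V > 0}"
proof -
  have p: "p > 0" using assms(1) by (rule prime_gt_0_nat)
  interpret group "lamplighter n p" by (rule lamp_group[OF p])
  define S where "S = {V. subgroup V (lamplighter n p) \<and> pi1 V > 0}"
  define hV where "hV V = (SOME x. x \<in> V \<and> snd x = int (pi1 V))" for V
  have hV: "hV V \<in> V \<and> snd (hV V) = int (pi1 V)" if "V \<in> S" for V
  proof -
    have V: "subgroup V (lamplighter n p)" using that by (simp add: S_def)
    have "int (pi1 V) * 1 \<in> snd ` V" using pi1_char[OF p V] by blast
    hence "\<exists>x. x \<in> V \<and> snd x = int (pi1 V)" by auto
    thus ?thesis unfolding hV_def by (rule someI_ex)
  qed
  define Phi where "Phi V = (KV V, hV V)" for V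
  define C where "C = (\<lambda>(d, A). clo p d A) ` (UNIV \<times> {A. finite A \<and> A \<subseteq> Lc n p})"
  have cC: "countable C" unfolding C_def
    by (intro countable_image countable_SIGMA countableI_type countable_Collect_finite_subset countable_Lc)
  have cCar: "countable (C \<times> carrier (lamplighter n p))"
    unfolding carrier_eq using cC countable_Lc by (intro countable_SIGMA countableI_type) auto
  have img: "Phi ` S \<subseteq> C \<times> carrier (lamplighter n p)"
  proof
    fix z assume "z \<in> Phi ` S"
    then obtain V where VS: "V \<in> S" and z: "z = Phi V" by auto
    have V: "subgroup V (lamplighter n p)" and pos: "pi1 V > 0" using VS by (auto simp: S_def)
    have Vc: "V \<subseteq> carrier (lamplighter n p)" using V by (rule subgroup.subset)
    define d where "d = int (pi1 V)"
    have d0: "d > 0" using pos by (simp add: d_def)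
    define hf where "hf = fst (hV V)"
    have hVe: "hV V = (hf, d)" using hV[OF VS] by (simp add: hf_def d_def prod_eq_iff)
    have "hV V \<in> V" using hV[OF VS] by simp
    hence hVV: "(hf, d) \<in> V" by (simp only: hVe)
    have hfL: "hf \<in> Lc n p" using hVV Vc by (auto simp: carrier_eq)
    have KL: "KV V \<subseteq> Lc n p" using Vc by (auto simp: KV_def carrier_eq)
    have "\<exists>A. finite A \<and> A \<subseteq> Lc n p \<and> KV V = clo p d A"
    proof (rule key[OF KL p d0])
      fix f g assume f: "f \<in> KV V" and g: "g \<in> KV V"
      have "(f, 0) \<otimes>\<^bsub>lamplighter n p\<^esub> (g, 0) \<in> V"
        using f g by (intro subgroup.m_closed[OF V]) (auto simp: KV_def)
      thus "addf p f g \<in> KV V" by (simp add: mult_zero_zero KV_def)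
    next
      fix f assume f: "f \<in> KV V"
      have fL: "f \<in> Lc n p" using f KL by auto
      have "inv\<^bsub>lamplighter n p\<^esub> (f, 0) \<in> V"
        using f by (intro subgroup.m_inv_closed[OF V]) (auto simp: KV_def)
      thus "negf p f \<in> KV V" by (simp add: inv_zero[OF p fL] KV_def)
    next
      fix f assume f: "f \<in> KV V"
      have fL: "f \<in> Lc n p" using f KL by auto
      have "(hf, d) \<otimes>\<^bsub>lamplighter n p\<^esub> (f, 0) \<otimes>\<^bsub>lamplighter n p\<^esub> inv\<^bsub>lamplighter n p\<^esub> (hf, d) \<in> V"
        using f hVV by (intro subgroup.m_closed[OF V] subgroup.m_inv_closed[OF V]) (auto simp: KV_def)
      thus "shf d f \<in> KV V" by (simp add: conj_l[OF p hfL fL] KV_def)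
    next
      fix f assume f: "f \<in> KV V"
      have fL: "f \<in> Lc n p" using f KL by auto
      have "inv\<^bsub>lamplighter n p\<^esub> (hf, d) \<otimes>\<^bsub>lamplighter n p\<^esub> (f, 0) \<otimes>\<^bsub>lamplighter n p\<^esub> (hf, d) \<in> V"
        using f hVV by (intro subgroup.m_closed[OF V] subgroup.m_inv_closed[OF V]) (auto simp: KV_def)
      thus "shf (-d) f \<in> KV V" by (simp add: conj_r[OF p hfL fL] KV_def)
    qed
    then obtain A where A: "finite A" "A \<subseteq> Lc n p" "KV V = clo p d A" by blast
    have "KV V \<in> C" unfolding C_def using A by (auto intro!: image_eqI[of _ _ "(d, A)"])
    moreover have "hV V \<in> carrier (lamplighter n p)" using hV[OF VS] Vc by auto
    ultimately show "z \<in> C \<times> carrier (lamplighter n p)" by (simp add: z Phi_def)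
  qed
  have inj: "inj_on Phi S"
  proof (rule inj_onI)
    fix V V' assume VS: "V \<in> S" and VS': "V' \<in> S" and e: "Phi V = Phi V'"
    have V: "subgroup V (lamplighter n p)" using VS by (simp add: S_def)
    have V': "subgroup V' (lamplighter n p)" using VS' by (simp add: S_def)
    have K: "KV V = KV V'" and h: "hV V = hV V'" using e by (simp_all add: Phi_def)
    show "V = V'"
    proof
      have h1: "hV V \<in> V" "hV V \<in> V'" "snd (hV V) = int (pi1 V)"
        using hV[OF VS] hV[OF VS'] h by auto
      have h2: "hV V' \<in> V'" "hV V' \<in> V" "snd (hV V') = int (pi1 V')"
        using hV[OF VS] hV[OF VS'] h by auto
      show "V \<subseteq> V'" by (rule sub_lemma[OF p V V' _ h1]) (simp add: K)
      show "V' \<subseteq> V" by (rule sub_lemma[OF p V' V _ h2]) (simp add: K)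
    qed
  qed
  have "countable (Phi ` S)" using countable_subset[OF img cCar] .
  hence "countable S" using inj by (rule countable_image_inj_on)
  thus ?thesis by (simp add: S_def)
qed

end
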